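(* Let $X$ be a set and $B$ a ternary relation on $X$. Then $(X,B)$ is $\mathbf{S}_0$-separated if and only if $B$ satisfies: (1) $B(x,x,y)$ and $B(x,y,y)$ for all $x,y\in X$; (2) $B(u,x,v)\wedge B(u,y,v)\wedge B(x,z,y)\implies B(u,z,v)$ for all $u,v,x,y,z\in X$; (3) $B(x,y,x)\wedge B(y,x,y)\implies x=y$ for all $x,y\in X$. Moreover, if $(X,B)$ is a betweenness structure then for every $a,b\in X$ the set $[a,b]=\{x\in X:B(a,x,b)\}$ is convex.
   Context: $\mathbf{S}_0=(\{0,1\},\beta)$ where $\beta(x,y,z)$ holds iff ($x=z=1\implies y=1$). A structure $(X,B)$ is $\mathbf{S}_0$-separated if it embeds (injective map preserving and reflecting the relation) into some power of $\mathbf{S}_0$; an $\mathbf{S}_0$-separated structure is called a betweenness structure. A subset $G$ of $(X,B)$ is convex if for all $a,b\in G$ and $x\in X$, $B(a,x,b)$ implies $x\in G$. *)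

theory Defs
  imports Main
begin

text \<open>The two-element structure S0 = ({0,1}, beta), with 0,1 rendered as False, True.\<close>
definition beta :: "bool \<Rightarrow> bool \<Rightarrow> bool \<Rightarrow> bool" where
  "beta x y z \<longleftrightarrow> (x \<and> z \<longrightarrow> y)"

text \<open>f is an embedding of (X,B) into the power S0^I (an element of the power is
  a function I -> bool; only its values on I matter).  Injective, preserving and
  reflecting the relation.\<close>
definition S0_embedding :: "'i set \<Rightarrow> ('a \<Rightarrow> 'i \<Rightarrow> bool) \<Rightarrow> 'a set \<Rightarrow> ('a \<Rightarrow> 'a \<Rightarrow> 'a \<Rightarrow> bool) \<Rightarrow> bool" where
  "S0_embedding I f X B \<longleftrightarrow>
     (\<forall>x\<in>X. \<forall>y\<in>X. (\<forall>i\<in>I. f x i = f y i) \<longrightarrow> x = y) \<and>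
     (\<forall>x\<in>X. \<forall>y\<in>X. \<forall>z\<in>X. B x y z \<longleftrightarrow> (\<forall>i\<in>I. beta (f x i) (f y i) (f z i)))"

definition S0_separated_in :: "'i itself \<Rightarrow> 'a set \<Rightarrow> ('a \<Rightarrow> 'a \<Rightarrow> 'a \<Rightarrow> bool) \<Rightarrow> bool" where
  "S0_separated_in _ X B \<longleftrightarrow> (\<exists>(I::'i set) f. S0_embedding I f X B)"

text \<open>Index sets are taken in the
  type 'a set set (large enough: WLOG an index set consists of distinct maps X -> {0,1});
  the main theorem also shows that any index type gives the same notion.\<close>
definition S0_separated :: "'a set \<Rightarrow> ('a \<Rightarrow> 'a \<Rightarrow> 'a \<Rightarrow> bool) \<Rightarrow> bool" where
  "S0_separated X B \<longleftrightarrow> S0_separated_in TYPE('a set set) X B"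

definition convex_in :: "'a set \<Rightarrow> ('a \<Rightarrow> 'a \<Rightarrow> 'a \<Rightarrow> bool) \<Rightarrow> 'a set \<Rightarrow> bool" where
  "convex_in X B G \<longleftrightarrow> G \<subseteq> X \<and> (\<forall>a\<in>G. \<forall>b\<in>G. \<forall>x\<in>X. B a x b \<longrightarrow> x \<in> G)"

end

theory Submission
  imports Defs
begin

definition axioms3 :: "'a set \<Rightarrow> ('a \<Rightarrow> 'a \<Rightarrow> 'a \<Rightarrow> bool) \<Rightarrow> bool" where
  "axioms3 X B \<longleftrightarrow> ((\<forall>x\<in>X. \<forall>y\<in>X. B x x y \<and> B x y y) \<and>
            (\<forall>u\<in>X. \<forall>v\<in>X. \<forall>x\<in>X. \<forall>y\<in>X. \<forall>z\<in>X.
                B u x v \<and> B u y v \<and> B x z y \<longrightarrow> B u z v) \<and>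
            (\<forall>x\<in>X. \<forall>y\<in>X. B x y x \<and> B y x y \<longrightarrow> x = y))"

lemma sep_axioms:
  assumes "S0_separated_in (TYPE('i)) X B"
  shows "axioms3 X B"
proof -
  obtain I :: "'i set" and f where e: "S0_embedding I f X B"
    using assms unfolding S0_separated_in_def by blast
  have inj: "\<And>x y. x\<in>X \<Longrightarrow> y\<in>X \<Longrightarrow> (\<forall>i\<in>I. f x i = f y i) \<Longrightarrow> x = y"
    and rel: "\<And>x y z. x\<in>X \<Longrightarrow> y\<in>X \<Longrightarrow> z\<in>X \<Longrightarrow> B x y z \<longleftrightarrow> (\<forall>i\<in>I. beta (f x i) (f y i) (f z i))"
    using e unfolding S0_embedding_def by blast+
  show ?thesis unfolding axioms3_def
  proof (intro conjI ballI impI)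
    fix x y assume "x\<in>X" "y\<in>X"
    moreover have "\<forall>i\<in>I. beta (f x i) (f x i) (f y i)" "\<forall>i\<in>I. beta (f x i) (f y i) (f y i)"
      unfolding beta_def by simp_all
    ultimately show "B x x y" "B x y y" using rel[of x x y] rel[of x y y] by simp_all
  next
    fix u v x y z assume h: "u\<in>X" "v\<in>X" "x\<in>X" "y\<in>X" "z\<in>X" "B u x v \<and> B u y v \<and> B x z y"
    have r1: "\<forall>i\<in>I. beta (f u i) (f x i) (f v i)" using rel[of u x v] h by simp
    have r2: "\<forall>i\<in>I. beta (f u i) (f y i) (f v i)" using rel[of u y v] h by simp
    have r3: "\<forall>i\<in>I. beta (f x i) (f z i) (f y i)" using rel[of x z y] h by simp
    have "\<forall>i\<in>I. beta (f u i) (f z i) (f v i)"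
    proof
      fix i assume "i \<in> I"
      hence "beta (f u i) (f x i) (f v i)" "beta (f u i) (f y i) (f v i)" "beta (f x i) (f z i) (f y i)"
        using r1 r2 r3 by blast+
      thus "beta (f u i) (f z i) (f v i)" unfolding beta_def by blast
    qed
    thus "B u z v" using rel[of u z v] h by simp
  next
    fix x y assume h: "x\<in>X" "y\<in>X" "B x y x \<and> B y x y"
    hence q1: "\<forall>i\<in>I. beta (f x i) (f y i) (f x i)" and q2: "\<forall>i\<in>I. beta (f y i) (f x i) (f y i)"
      using rel[of x y x] rel[of y x y] by simp_all
    have "\<forall>i\<in>I. f x i = f y i"
    proof
      fix i assume "i\<in>I"
      hence "beta (f x i) (f y i) (f x i)" "beta (f y i) (f x i) (f y i)" using q1 q2 by blast+
      thus "f x i = f y i" unfolding beta_def by blast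
    qed
    thus "x = y" using inj h by blast
  qed
qed

lemma axioms_sep:
  fixes X :: "'a set"
  assumes "axioms3 X B"
  shows "S0_separated X B"
proof -
  have a1: "\<And>x y. x\<in>X \<Longrightarrow> y\<in>X \<Longrightarrow> B x x y \<and> B x y y"
   and a2: "\<And>u v x y z. u\<in>X \<Longrightarrow> v\<in>X \<Longrightarrow> x\<in>X \<Longrightarrow> y\<in>X \<Longrightarrow> z\<in>X \<Longrightarrow>
                B u x v \<Longrightarrow> B u y v \<Longrightarrow> B x z y \<Longrightarrow> B u z v"
   and a3: "\<And>x y. x\<in>X \<Longrightarrow> y\<in>X \<Longrightarrow> B x y x \<Longrightarrow> B y x y \<Longrightarrow> x = y"
    using assms unfolding axioms3_def by blast+
  define I :: "'a set set set" where "I = {{C} | C. convex_in X B C}"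
  define f :: "'a \<Rightarrow> 'a set set \<Rightarrow> bool" where "f x i = (x \<in> \<Union>i)" for x i
  have iv: "\<And>a b. a\<in>X \<Longrightarrow> b\<in>X \<Longrightarrow> convex_in X B {w\<in>X. B a w b}"
    unfolding convex_in_def
  proof (intro conjI ballI impI)
    fix a b p q w assume "a\<in>X" "b\<in>X" "p \<in> {w\<in>X. B a w b}" "q \<in> {w\<in>X. B a w b}" "w\<in>X" "B p w q"
    thus "w \<in> {w\<in>X. B a w b}" using a2[of a b p q w] by simp
  qed auto
  have key: "\<And>x y z. x\<in>X \<Longrightarrow> y\<in>X \<Longrightarrow> z\<in>X \<Longrightarrow> B x y z \<longleftrightarrow> (\<forall>i\<in>I. beta (f x i) (f y i) (f z i))"
  proof
    fix x y z assume h: "x\<in>X" "y\<in>X" "z\<in>X" "B x y z"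
    show "\<forall>i\<in>I. beta (f x i) (f y i) (f z i)"
    proof
      fix i assume "i \<in> I"
      then obtain C where C: "i = {C}" "convex_in X B C" unfolding I_def by blast
      have "x \<in> C \<and> z \<in> C \<longrightarrow> y \<in> C" using C(2) h unfolding convex_in_def by blast
      thus "beta (f x i) (f y i) (f z i)" unfolding C(1) f_def beta_def by simp
    qed
  next
    fix x y z assume h: "x\<in>X" "y\<in>X" "z\<in>X" and r: "\<forall>i\<in>I. beta (f x i) (f y i) (f z i)"
    have "{{w\<in>X. B x w z}} \<in> I" using iv h unfolding I_def by blast
    from r[rule_format, OF this] show "B x y z" using a1 h unfolding f_def beta_def by auto
  qed
  have inj: "\<And>x y. x\<in>X \<Longrightarrow> y\<in>X \<Longrightarrow> (\<forall>i\<in>I. f x i = f y i) \<Longrightarrow> x = y"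
  proof -
    fix x y assume h: "x\<in>X" "y\<in>X" "\<forall>i\<in>I. f x i = f y i"
    have "\<forall>i\<in>I. beta (f x i) (f y i) (f x i)" "\<forall>i\<in>I. beta (f y i) (f x i) (f y i)"
      using h(3) by (auto simp: beta_def)
    hence "B x y x" "B y x y" using key[of x y x] key[of y x y] h(1,2) by simp_all
    thus "x = y" using a3 h by blast
  qed
  have "S0_embedding I f X B" unfolding S0_embedding_def
  proof (intro conjI ballI impI)
    fix x y assume "x\<in>X" "y\<in>X" "\<forall>i\<in>I. f x i = f y i"
    thus "x = y" by (rule inj)
  next
    fix x y z assume "x\<in>X" "y\<in>X" "z\<in>X"
    thus "B x y z \<longleftrightarrow> (\<forall>i\<in>I. beta (f x i) (f y i) (f z i))" by (rule key)
  qed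
  hence emb: "S0_embedding I f X B" .
  have "\<exists>(I'::'a set set set) f'. S0_embedding I' f' X B" by (rule exI[of _ I], rule exI[of _ f], rule emb)
  thus ?thesis unfolding S0_separated_def S0_separated_in_def .
qed

theorem mainTheorem16:
  fixes X :: "'a set" and B :: "'a \<Rightarrow> 'a \<Rightarrow> 'a \<Rightarrow> bool"
  shows "(S0_separated X B \<longleftrightarrow>
           ((\<forall>x\<in>X. \<forall>y\<in>X. B x x y \<and> B x y y) \<and>
            (\<forall>u\<in>X. \<forall>v\<in>X. \<forall>x\<in>X. \<forall>y\<in>X. \<forall>z\<in>X.
                B u x v \<and> B u y v \<and> B x z y \<longrightarrow> B u z v) \<and>
            (\<forall>x\<in>X. \<forall>y\<in>X. B x y x \<and> B y x y \<longrightarrow> x = y)))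
       \<and> (S0_separated_in TYPE('i) X B \<longrightarrow> S0_separated X B)
       \<and> (S0_separated X B \<longrightarrow> (\<forall>a\<in>X. \<forall>b\<in>X. convex_in X B {x\<in>X. B a x b}))"
proof -
  have eq: "S0_separated X B \<longleftrightarrow> axioms3 X B"
  proof
    assume "S0_separated X B" thus "axioms3 X B" unfolding S0_separated_def by (rule sep_axioms)
  next
    assume "axioms3 X B" thus "S0_separated X B" by (rule axioms_sep)
  qed
  have 2: "S0_separated_in TYPE('i) X B \<longrightarrow> S0_separated X B"
  proof
    assume "S0_separated_in TYPE('i) X B" hence "axioms3 X B" by (rule sep_axioms)
    thus "S0_separated X B" by (rule axioms_sep)
  qed
  have 3: "S0_separated X B \<longrightarrow> (\<forall>a\<in>X. \<forall>b\<in>X. convex_in X B {x\<in>X. B a x b})"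
  proof (intro impI ballI)
    fix a b assume "S0_separated X B" "a\<in>X" "b\<in>X"
    hence ax: "axioms3 X B" using eq by simp
    show "convex_in X B {x\<in>X. B a x b}" unfolding convex_in_def
    proof (intro conjI ballI impI)
      fix p q x assume "p \<in> {x\<in>X. B a x b}" "q \<in> {x\<in>X. B a x b}" "x\<in>X" "B p x q"
      thus "x \<in> {x\<in>X. B a x b}" using ax \<open>a\<in>X\<close> \<open>b\<in>X\<close> unfolding axioms3_def by blast
    qed auto
  qed
  show ?thesis using 2 3 by (simp only: eq[unfolded axioms3_def])
qed

end
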